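(* Let $X_1$ and $X_2$ be two elliptic ovoids of $Q_0$ meeting in a conic. If $x\in X_1\setminus X_2$, then there exist exactly two distinct elliptic ovoids of $Q_0$ containing $x$ which are tangent to both $X_1$ and $X_2$. If $x\in X_1\cap X_2$, then there is no elliptic ovoid of $Q_0$ containing $x$ which is tangent to both $X_1$ and $X_2$.
   Context: Let $q=2^n$ and let $Q_0\cong Q(4,q)$ be the parabolic quadric generalized quadrangle in $\mathrm{PG}(4,q)$. An elliptic ovoid of $Q_0$ is a set $X=S\cap Q_0$ where $S$ is a $3$-dimensional projective subspace meeting $Q_0$ in an elliptic quadric $Q^-(3,q)$. Two distinct elliptic ovoids meet either in exactly one point (then they are called tangent) or in a non-degenerate conic. *)

theory Defs
  imports "HOL-Analysis.Finite_Cartesian_Product"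
begin

text \<open>Vectors of the 5-dimensional space V(5,F); points of PG(4,F) are the
  1-dimensional subspaces, represented as the set of nonzero multiples of a
  nonzero vector.\<close>

definition vadd :: "'a::field^5 \<Rightarrow> 'a^5 \<Rightarrow> 'a^5" where
  "vadd u w = (\<chi> i. u$i + w$i)"

definition vsmult :: "'a::field \<Rightarrow> 'a^5 \<Rightarrow> 'a^5" where
  "vsmult c v = (\<chi> i. c * v$i)"

definition pt :: "'a::field^5 \<Rightarrow> ('a^5) set" where
  "pt v = {vsmult c v | c. c \<noteq> 0}"

definition qform :: "(5 \<Rightarrow> 5 \<Rightarrow> 'a::field) \<Rightarrow> 'a^5 \<Rightarrow> 'a" where
  "qform A x = (\<Sum>i\<in>UNIV. \<Sum>j\<in>UNIV. A i j * x$i * x$j)"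

definition polar :: "(5 \<Rightarrow> 5 \<Rightarrow> 'a::field) \<Rightarrow> 'a^5 \<Rightarrow> 'a^5 \<Rightarrow> 'a" where
  "polar A x y = qform A (vadd x y) - qform A x - qform A y"

definition lin :: "'a::field^5 \<Rightarrow> 'a^5 \<Rightarrow> 'a" where
  "lin h x = (\<Sum>i\<in>UNIV. h$i * x$i)"

definition lin_indep2 :: "'a::field^5 \<Rightarrow> 'a^5 \<Rightarrow> bool" where
  "lin_indep2 u w \<longleftrightarrow> (\<forall>a b. vadd (vsmult a u) (vsmult b w) = 0 \<longrightarrow> a = 0 \<and> b = 0)"

text \<open>The quadric of PG(4,F) defined by the form; it is non-degenerate
  (i.e. parabolic, isomorphic to Q(4,q)) iff it has no singular point.\<close>
definition quadric_pts :: "(5 \<Rightarrow> 5 \<Rightarrow> 'a::field) \<Rightarrow> ('a^5) set set" where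
  "quadric_pts A = {pt v | v. v \<noteq> 0 \<and> qform A v = 0}"

definition parabolic :: "(5 \<Rightarrow> 5 \<Rightarrow> 'a::field) \<Rightarrow> bool" where
  "parabolic A \<longleftrightarrow>
     (\<forall>v. v \<noteq> 0 \<and> qform A v = 0 \<longrightarrow> (\<exists>w. polar A v w \<noteq> 0))"

definition solid_section :: "(5 \<Rightarrow> 5 \<Rightarrow> 'a::field) \<Rightarrow> 'a^5 \<Rightarrow> ('a^5) set set" where
  "solid_section A h = {pt v | v. v \<noteq> 0 \<and> qform A v = 0 \<and> lin h v = 0}"

text \<open>The section by the solid is an elliptic quadric Q^-(3,q): it is
  non-degenerate (no singular point within the solid) and contains no line.\<close>
definition elliptic_solid :: "(5 \<Rightarrow> 5 \<Rightarrow> 'a::field) \<Rightarrow> 'a^5 \<Rightarrow> bool" where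
  "elliptic_solid A h \<longleftrightarrow> h \<noteq> 0 \<and>
     (\<forall>v. v \<noteq> 0 \<and> lin h v = 0 \<and> qform A v = 0 \<longrightarrow>
        (\<exists>w. lin h w = 0 \<and> polar A v w \<noteq> 0)) \<and>
     \<not> (\<exists>u w. lin_indep2 u w \<and> lin h u = 0 \<and> lin h w = 0 \<and>
           (\<forall>a b. qform A (vadd (vsmult a u) (vsmult b w)) = 0))"

definition elliptic_ovoid :: "(5 \<Rightarrow> 5 \<Rightarrow> 'a::field) \<Rightarrow> ('a^5) set set \<Rightarrow> bool" where
  "elliptic_ovoid A X \<longleftrightarrow> (\<exists>h. elliptic_solid A h \<and> X = solid_section A h)"

definition nondeg_conic :: "(5 \<Rightarrow> 5 \<Rightarrow> 'a::field) \<Rightarrow> ('a^5) set set \<Rightarrow> bool" where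
  "nondeg_conic A C \<longleftrightarrow> (\<exists>h1 h2. lin_indep2 h1 h2 \<and>
     C = {pt v | v. v \<noteq> 0 \<and> qform A v = 0 \<and> lin h1 v = 0 \<and> lin h2 v = 0} \<and>
     (\<forall>v. v \<noteq> 0 \<and> lin h1 v = 0 \<and> lin h2 v = 0 \<and> qform A v = 0 \<longrightarrow>
        (\<exists>w. lin h1 w = 0 \<and> lin h2 w = 0 \<and> polar A v w \<noteq> 0)))"

definition tangent :: "('a^5) set set \<Rightarrow> ('a^5) set set \<Rightarrow> bool" where
  "tangent X Y \<longleftrightarrow> X \<noteq> Y \<and> (\<exists>p. X \<inter> Y = {p})"

end

theory Submission
  imports Defs
begin

lemma vadd_eq: "vadd u w = u + w" by (simp add: vadd_def vec_eq_iff)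
lemma vsmult_eq: "vsmult c v = c *s v" by (simp add: vsmult_def vec_eq_iff)

lemma polar_formula:
  "polar A x y = (\<Sum>i\<in>UNIV. \<Sum>j\<in>UNIV. A i j * (x$i * y$j + y$i * x$j))"
  unfolding polar_def qform_def vadd_def
  by (simp add: sum_subtractf[symmetric] algebra_simps)

lemma qform_add: "qform A (x + y) = qform A x + qform A y + polar A x y"
  by (simp add: polar_def vadd_eq)

lemma qform_smult: "qform A (c *s x) = c^2 * qform A x"
  unfolding qform_def by (simp add: sum_distrib_left algebra_simps power2_eq_square)

lemma polar_add1: "polar A (x + y) z = polar A x z + polar A y z"
  unfolding polar_formula by (simp add: sum.distrib[symmetric] algebra_simps)
lemma polar_add2: "polar A z (x + y) = polar A z x + polar A z y"
  unfolding polar_formula by (simp add: sum.distrib[symmetric] algebra_simps)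
lemma polar_smult1: "polar A (c *s x) z = c * polar A x z"
  unfolding polar_formula by (simp add: sum_distrib_left algebra_simps)
lemma polar_smult2: "polar A z (c *s x) = c * polar A z x"
  unfolding polar_formula by (simp add: sum_distrib_left algebra_simps)
lemma polar_sym: "polar A x y = polar A y x"
  unfolding polar_formula by (simp add: algebra_simps)
lemma polar_zero1[simp]: "polar A 0 y = 0" unfolding polar_formula by simp
lemma polar_zero2[simp]: "polar A y 0 = 0" unfolding polar_formula by simp
lemma qform_zero[simp]: "qform A 0 = 0" unfolding qform_def by simp

lemma lin_add: "lin h (x + y) = lin h x + lin h y"
  unfolding lin_def by (simp add: sum.distrib[symmetric] algebra_simps)
lemma lin_smult: "lin h (c *s x) = c * lin h x"
  unfolding lin_def by (simp add: sum_distrib_left algebra_simps)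
lemma lin_addh: "lin (h + k) x = lin h x + lin k x"
  unfolding lin_def by (simp add: sum.distrib[symmetric] algebra_simps)
lemma lin_smulth: "lin (c *s h) x = c * lin h x"
  unfolding lin_def by (simp add: sum_distrib_left algebra_simps)
lemma lin_zero[simp]: "lin h 0 = 0" "lin 0 x = 0" unfolding lin_def by simp_all

lemma polar_rep: "\<exists>G. \<forall>v. lin G v = polar A w v"
proof -
  let ?G = "\<chi> j. \<Sum>i\<in>UNIV. (A i j + A j i) * w$i"
  have "lin ?G v = polar A w v" for v
    unfolding lin_def polar_formula
    apply (simp add: sum_distrib_left sum_distrib_right algebra_simps)
    apply (subst (2) sum.swap) apply (simp add: algebra_simps sum.distrib)
    apply (rule sum.swap)
    done
  thus ?thesis by blast
qed

lemma lin_zero_imp: "(\<forall>v. lin h v = 0) \<Longrightarrow> h = 0"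
proof -
  assume a: "\<forall>v. lin h v = 0"
  have "h $ i = 0" for i
  proof -
    have "lin h (axis i 1) = h $ i" unfolding lin_def axis_def
      by (simp add: if_distrib cong: if_cong)
    thus ?thesis using a by simp
  qed
  thus ?thesis by (simp add: vec_eq_iff)
qed



definition subsp :: "('a::field^5) set \<Rightarrow> bool" where
  "subsp S \<longleftrightarrow> 0 \<in> S \<and> (\<forall>x\<in>S. \<forall>y\<in>S. x + y \<in> S) \<and> (\<forall>c. \<forall>x\<in>S. c *s x \<in> S)"
definition linf :: "('a::field^5 \<Rightarrow> 'a) \<Rightarrow> bool" where
  "linf \<phi> \<longleftrightarrow> (\<forall>x y. \<phi> (x+y) = \<phi> x + \<phi> y) \<and> (\<forall>c x. \<phi> (c *s x) = c * \<phi> x)"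

lemma linf_lin: "linf (lin h)" by (simp add: linf_def lin_add lin_smult)
lemma linf_polar: "linf (polar A w)" by (simp add: linf_def polar_add2 polar_smult2)
lemma linf_add: "linf \<phi> \<Longrightarrow> \<phi> (x+y) = \<phi> x + \<phi> y" by (simp add: linf_def)
lemma linf_smult: "linf \<phi> \<Longrightarrow> \<phi> (c *s x) = c * \<phi> x" by (simp add: linf_def)
lemma linf_zero: "linf \<phi> \<Longrightarrow> \<phi> 0 = 0"
  using linf_smult[of \<phi> 0 0] by simp
lemma linf_diff: "linf \<phi> \<Longrightarrow> \<phi> (x-y) = \<phi> x - \<phi> y"
  using linf_add[of \<phi> "x - y" y] by simp

lemma subsp_UNIV: "subsp UNIV" by (simp add: subsp_def)
lemma subsp_ker: "subsp S \<Longrightarrow> linf \<phi> \<Longrightarrow> subsp {v\<in>S. \<phi> v = 0}"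
  by (auto simp: subsp_def linf_add linf_smult linf_zero)
lemma subsp_diff: assumes "subsp S" "x \<in> S" "y \<in> S" shows "x - y \<in> S"
proof -
  have "x - y = x + (-1) *s y" by (simp add: vec_eq_iff)
  thus ?thesis using assms unfolding subsp_def by metis
qed

lemma count_ker:
  fixes S :: "('a::{field,finite}^5) set"
  assumes S: "subsp S" and \<phi>: "linf \<phi>" and e: "e \<in> S" "\<phi> e \<noteq> 0"
  shows "card S = CARD('a) * card {v\<in>S. \<phi> v = 0}"
proof -
  let ?K = "{v\<in>S. \<phi> v = 0}"
  let ?F = "\<lambda>v. (v - (\<phi> v / \<phi> e) *s e, \<phi> v)"
  have "bij_betw ?F S (?K \<times> UNIV)"
  proof (rule bij_betw_byWitness[where f'="\<lambda>(w,t). w + (t / \<phi> e) *s e"])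
    show "\<forall>a\<in>S. (case ?F a of (w, t) \<Rightarrow> w + (t / \<phi> e) *s e) = a" by simp
    show "\<forall>a'\<in>?K \<times> UNIV. ?F (case a' of (w, t) \<Rightarrow> w + (t / \<phi> e) *s e) = a'"
      using e by (auto simp: linf_add[OF \<phi>] linf_smult[OF \<phi>])
    show "?F ` S \<subseteq> ?K \<times> UNIV"
      using e S by (auto simp: linf_diff[OF \<phi>] linf_smult[OF \<phi>] subsp_def intro!: subsp_diff[OF S])
    show "(\<lambda>(w, t). w + (t / \<phi> e) *s e) ` (?K \<times> UNIV) \<subseteq> S"
      using e S by (auto simp: subsp_def)
  qed
  hence "card S = card (?K \<times> (UNIV::'a set))" by (rule bij_betw_same_card)
  thus ?thesis by (simp add: card_cartesian_product)
qed



lemma card_ge2: "CARD('a::{field,finite}) \<ge> 2"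
proof -
  have "{0::'a, 1} \<subseteq> UNIV" by simp
  hence "card {0::'a,1} \<le> CARD('a)" by (intro card_mono) auto
  thus ?thesis by simp
qed

definition span1 :: "'a::field^5 \<Rightarrow> ('a^5) set" where "span1 r = range (\<lambda>c. c *s r)"

lemma card_span1: "(r::'a::{field,finite}^5) \<noteq> 0 \<Longrightarrow> card (span1 r) = CARD('a)"
  unfolding span1_def
  apply (rule card_image)
  by (auto simp: inj_on_def vec_eq_iff)

lemma span1_sub: "subsp S \<Longrightarrow> r \<in> S \<Longrightarrow> span1 r \<subseteq> S"
  by (auto simp: span1_def subsp_def)

lemma exists_nonzero: assumes "subsp S" "card S > 1" shows "\<exists>r\<in>S. r \<noteq> (0::'a::{field,finite}^5)"
proof (rule ccontr)
  assume "\<not> ?thesis" hence "S \<subseteq> {0}" by auto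
  hence "card S \<le> card {0::'a^5}" by (intro card_mono) auto
  hence "card S \<le> 1" by simp
  thus False using assms by simp
qed

lemma exists_outside: assumes "subsp S" "card S > CARD('a)" "r \<noteq> 0"
  shows "\<exists>u\<in>S. u \<notin> span1 (r::'a::{field,finite}^5)"
proof (rule ccontr)
  assume "\<not> ?thesis" hence "S \<subseteq> span1 r" by auto
  hence "card S \<le> card (span1 r)" by (intro card_mono) auto
  thus False using assms card_span1[OF assms(3)] by simp
qed

lemma span1_eq: assumes "subsp S" "card S = CARD('a)" "r \<in> S" "r \<noteq> (0::'a::{field,finite}^5)"
  shows "S = span1 r"
  by (metis assms card_span1 span1_sub card_subset_eq finite) 

locale c2 = fixes A :: "5 \<Rightarrow> 5 \<Rightarrow> 'a::{field,finite}"
  assumes char2: "(1::'a) + 1 = 0"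
begin

abbreviation "Q \<equiv> qform A"
abbreviation "f \<equiv> polar A"

lemma add_self[simp]: "(x::'a) + x = 0"
proof - have "x + x = (1+1)*x" by (simp add: algebra_simps) thus ?thesis using char2 by simp qed
lemma two_zero[simp]: "(2::'a) = 0" using char2 by (metis one_add_one)
lemma add_self2[simp]: "(x::'a) + (x + y) = y"
  by (simp add: add.assoc[symmetric])
lemma uminus_id[simp]: "-(x::'a) = x"
  by (metis add_self minus_unique)
lemma diff_add: "(x::'a) - y = x + y" by simp
lemma vadd_self[simp]: "(v::'a^5) + v = 0" by (simp add: vec_eq_iff)
lemma vuminus_id[simp]: "-(v::'a^5) = v" by (simp add: vec_eq_iff)
lemma vdiff_add: "(v::'a^5) - w = v + w" by (simp add: vec_eq_iff)

lemma polar_self[simp]: "f x x = 0"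
  using qform_add[of A x x] by simp

lemma sqrt_ex: "\<exists>s. s^2 = (y::'a)"
proof -
  have "inj (\<lambda>s::'a. s^2)"
  proof (rule injI)
    fix s t :: 'a assume "s^2 = t^2"
    have "(s+t)^2 = s^2 + t^2 + (s*t + s*t)" by (simp add: power2_eq_square algebra_simps)
    also have "\<dots> = 0" using \<open>s^2 = t^2\<close> by simp
    finally have "s + t = 0" by simp
    thus "s = t" by (metis add_self2 add_0_right)
  qed
  hence "surj (\<lambda>s::'a. s^2)" by (simp add: finite_UNIV_inj_surj)
  thus ?thesis by (metis surjD)
qed

lemma radical:
  assumes "subsp S" "card S = CARD('a)^(2*k+1)"
  shows "\<exists>r\<in>S. r \<noteq> 0 \<and> (\<forall>v\<in>S. f r v = 0)"
  using assms
proof (induction k arbitrary: S)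
  case 0
  have "card S > 1" using 0 card_ge2[where 'a='a] by simp
  then obtain r where r: "r \<in> S" "r \<noteq> 0" using exists_nonzero 0 by blast
  have "S = span1 r" using span1_eq 0 r by simp
  hence "\<forall>v\<in>S. f r v = 0" by (auto simp: span1_def polar_smult2)
  thus ?case using r by blast
next
  case (Suc k)
  have "1 < CARD('a)^(2*Suc k+1)" using card_ge2[where 'a='a] by (intro one_less_power) auto
  hence cg: "card S > 1" using Suc.prems by simp
  then obtain e1 where e1: "e1 \<in> S" "e1 \<noteq> 0" using exists_nonzero Suc.prems by blast
  show ?case
  proof (cases "\<forall>v\<in>S. f e1 v = 0")
    case True thus ?thesis using e1 by blast
  next
    case False
    then obtain e where e: "e \<in> S" "f e1 e \<noteq> 0" by blast
    define e2 where "e2 = (1 / f e1 e) *s e"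
    have e2S: "e2 \<in> S" using Suc.prems e by (simp add: e2_def subsp_def)
    have f12: "f e1 e2 = 1" using e by (simp add: e2_def polar_smult2)
    have f21: "f e2 e1 = 1" using f12 polar_sym by metis
    define S1 where "S1 = {v\<in>S. f e1 v = 0}"
    define S2 where "S2 = {v\<in>S1. f e2 v = 0}"
    have sS1: "subsp S1" unfolding S1_def by (rule subsp_ker[OF Suc.prems(1) linf_polar])
    have sS2: "subsp S2" unfolding S2_def by (rule subsp_ker[OF sS1 linf_polar])
    have c1: "card S = CARD('a) * card S1" unfolding S1_def
      by (rule count_ker[OF Suc.prems(1) linf_polar e2S]) (simp add: f12)
    have e1S1: "e1 \<in> S1" using e1 by (simp add: S1_def)
    have c2: "card S1 = CARD('a) * card S2" unfolding S2_def
      by (rule count_ker[OF sS1 linf_polar e1S1]) (simp add: f21)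
    have "card S2 = CARD('a)^(2*k+1)"
    proof -
      have "CARD('a)^(2*Suc k+1) = CARD('a)*(CARD('a) * CARD('a)^(2*k+1))" by (simp add: power_add)
      hence "CARD('a)*(CARD('a) * card S2) = CARD('a)*(CARD('a) * CARD('a)^(2*k+1))"
        using c1 c2 Suc.prems(2) by simp
      thus ?thesis using card_ge2[where 'a='a] by simp
    qed
    then obtain r where r: "r \<in> S2" "r \<noteq> 0" "\<forall>v\<in>S2. f r v = 0" using Suc.IH sS2 by blast
    have rS: "r \<in> S" and r1: "f e1 r = 0" and r2: "f e2 r = 0" using r(1) by (auto simp: S2_def S1_def)
    have "f r v = 0" if v: "v \<in> S" for v
    proof -
      define w where "w = v + (f v e2) *s e1 + (f v e1) *s e2"
      have wS: "w \<in> S" using Suc.prems(1) v e1 e2S by (simp add: w_def subsp_def)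
      have "f e1 w = 0" unfolding w_def
        by (simp add: polar_add2 polar_smult2 f12 polar_sym[of A e1 v])
      moreover have "f e2 w = 0" unfolding w_def
        by (simp add: polar_add2 polar_smult2 f21 polar_sym[of A e2 v])
      ultimately have "w \<in> S2" using wS by (simp add: S2_def S1_def)
      hence "f r w = 0" using r by blast
      moreover have "f r w = f r v" unfolding w_def
        using r1 r2 by (simp add: polar_add2 polar_smult2 polar_sym[of A r e1] polar_sym[of A r e2])
      ultimately show ?thesis by simp
    qed
    thus ?thesis using rS r(2) by blast
  qed
qed

end


lemma K1:
  assumes \<phi>: "linf \<phi>" and \<psi>: "linf \<psi>" and k: "\<forall>v. \<phi> v = 0 \<longrightarrow> \<psi> v = 0"
  shows "\<exists>a. \<forall>v. \<psi> v = a * \<phi> v"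
proof (cases "\<forall>v. \<phi> v = 0")
  case True thus ?thesis using k by auto
next
  case False
  then obtain e where e: "\<phi> e \<noteq> 0" by blast
  have "\<psi> v = (\<psi> e / \<phi> e) * \<phi> v" for v
  proof -
    let ?w = "v - (\<phi> v / \<phi> e) *s e"
    have "\<phi> ?w = 0" using e by (simp add: linf_diff[OF \<phi>] linf_smult[OF \<phi>])
    hence "\<psi> ?w = 0" using k by blast
    hence "\<psi> v = (\<phi> v / \<phi> e) * \<psi> e" by (simp add: linf_diff[OF \<psi>] linf_smult[OF \<psi>])
    thus ?thesis by simp
  qed
  thus ?thesis by blast
qed

lemma K2:
  assumes \<phi>1: "linf \<phi>1" and \<phi>2: "linf \<phi>2" and \<psi>: "linf \<psi>"
    and k: "\<forall>v. \<phi>1 v = 0 \<and> \<phi>2 v = 0 \<longrightarrow> \<psi> v = 0"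
  shows "\<exists>a b. \<forall>v. \<psi> v = a * \<phi>1 v + b * \<phi>2 v"
proof (cases "\<forall>v. \<phi>1 v = 0")
  case True
  then obtain b where "\<forall>v. \<psi> v = b * \<phi>2 v" using K1[OF \<phi>2 \<psi>] k by blast
  thus ?thesis by (metis add_0 mult_zero_left)
next
  case False
  then obtain e0 where e0: "\<phi>1 e0 \<noteq> 0" by blast
  define e where "e = (1 / \<phi>1 e0) *s e0"
  have e: "\<phi>1 e = 1" using e0 by (simp add: e_def linf_smult[OF \<phi>1])
  define \<phi>2' where "\<phi>2' = (\<lambda>v. \<phi>2 (v - \<phi>1 v *s e))"
  define \<psi>' where "\<psi>' = (\<lambda>v. \<psi> (v - \<phi>1 v *s e))"
  have l2: "linf \<phi>2'" unfolding linf_def \<phi>2'_def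
    by (simp add: linf_diff[OF \<phi>2] linf_add[OF \<phi>2] linf_smult[OF \<phi>2] linf_add[OF \<phi>1] linf_smult[OF \<phi>1] algebra_simps)
  have l3: "linf \<psi>'" unfolding linf_def \<psi>'_def
    by (simp add: linf_diff[OF \<psi>] linf_add[OF \<psi>] linf_smult[OF \<psi>] linf_add[OF \<phi>1] linf_smult[OF \<phi>1] algebra_simps)
  have "\<forall>v. \<phi>2' v = 0 \<longrightarrow> \<psi>' v = 0"
  proof (intro allI impI)
    fix v assume "\<phi>2' v = 0"
    moreover have "\<phi>1 (v - \<phi>1 v *s e) = 0" by (simp add: linf_diff[OF \<phi>1] linf_smult[OF \<phi>1] e)
    ultimately show "\<psi>' v = 0" using k by (simp add: \<phi>2'_def \<psi>'_def)
  qed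
  then obtain b where b: "\<forall>v. \<psi>' v = b * \<phi>2' v" using K1[OF l2 l3] by blast
  have "\<psi> v = (\<psi> e - b * \<phi>2 e) * \<phi>1 v + b * \<phi>2 v" for v
    using b[rule_format, of v] unfolding \<psi>'_def \<phi>2'_def
    by (simp add: linf_diff[OF \<psi>] linf_smult[OF \<psi>] linf_diff[OF \<phi>2] linf_smult[OF \<phi>2] algebra_simps)
  thus ?thesis by blast
qed

context c2 begin

definition "Pset = range (\<lambda>z::'a. z^2 + z)"

lemma P_add: "x \<in> Pset \<Longrightarrow> y \<in> Pset \<Longrightarrow> x + y \<in> Pset"
proof -
  assume "x \<in> Pset" "y \<in> Pset"
  then obtain z w where "x = z^2+z" "y = w^2+w" by (auto simp: Pset_def)
  moreover have "(z+w)^2 + (z+w) = (z^2+z) + (w^2+w) + (z*w+z*w)" by (simp add: power2_eq_square algebra_simps)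
  ultimately have "x + y = (z+w)^2 + (z+w)" by simp
  thus ?thesis by (simp add: Pset_def)
qed

lemma card_P: "CARD('a) = card Pset * 2"
proof -
  let ?p = "\<lambda>z::'a. z^2 + z"
  let ?s = "inv ?p"
  have ps: "?p (?s y) = y" if "y \<in> Pset" for y using f_inv_into_f[OF that[unfolded Pset_def]] by simp
  have fib: "z + w = 0 \<or> z + w = 1" if "?p z = ?p w" for z w
  proof -
    have "(z+w)*((z+w)+1) = (z^2+z) + (w^2+w) + (z*w+z*w)" by (simp add: power2_eq_square algebra_simps)
    also have "\<dots> = (w^2+w) + (w^2+w)" using that by simp
    finally have "(z+w)*((z+w)+1) = 0" by simp
    hence "z + w = 0 \<or> (z+w)+1 = 0" by simp
    moreover have "z + w = 1" if "(z+w)+1 = 0"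
    proof - have "z + w = ((z+w)+1) + 1" by (simp add: add.assoc)
      thus ?thesis using that by simp qed
    ultimately show ?thesis by blast
  qed
  have p1: "?p (z+1) = ?p z" for z
  proof - have "(z+1)^2 + (z+1) = z^2+z + (z+z) + (1+1)" by (simp add: power2_eq_square algebra_simps)
    thus ?thesis by simp qed
  have key: "?p (?s y + b) = y \<and> (?s y + b) + ?s (?p (?s y + b)) = b" if yb: "y \<in> Pset" "b \<in> {0::'a,1}" for y b
  proof -
    have py: "?p (?s y + b) = y"
    proof (cases "b = 0")
      case True thus ?thesis using ps yb by simp
    next
      case False hence "b = 1" using yb by auto
      thus ?thesis using p1[of "?s y"] ps[OF yb(1)] by (simp only:)
    qed
    thus ?thesis by (simp add: add.commute[of "?s y" b] add.assoc)
  qed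
  have img: "?p z \<in> Pset \<and> (z + ?s (?p z) = 0 \<or> z + ?s (?p z) = 1)" for z
  proof -
    have pz: "?p z \<in> Pset" by (simp add: Pset_def)
    hence "?p (?s (?p z)) = ?p z" using ps by blast
    hence "z + ?s (?p z) = 0 \<or> z + ?s (?p z) = 1" using fib[of z "?s (?p z)"] by simp
    thus ?thesis using pz by blast
  qed
  have "bij_betw (\<lambda>z. (?p z, z + ?s (?p z))) UNIV (Pset \<times> {0,1})"
    apply (rule bij_betw_byWitness[where f'="\<lambda>(y,b). ?s y + b"])
       apply (simp add: add.assoc[symmetric])
      apply clarify
    subgoal for y b using key[of y b] by simp
     apply (rule image_subsetI)
    subgoal for z using img[of z] by auto
    apply simp
    done
  hence "CARD('a) = card (Pset \<times> {0::'a,1})" by (rule bij_betw_same_card)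
  thus ?thesis by (simp add: card_cartesian_product)
qed

lemma P_index2: assumes "x \<notin> Pset" "y \<notin> Pset" shows "x + y \<in> Pset"
proof -
  let ?C = "(\<lambda>z. x + z) ` Pset"
  have cC: "card ?C = card Pset" by (rule card_image) (auto simp: inj_on_def)
  have disj: "?C \<inter> Pset = {}"
  proof (rule ccontr)
    assume "?C \<inter> Pset \<noteq> {}"
    then obtain z where z: "z \<in> Pset" "x + z \<in> Pset" by auto
    hence "(x + z) + z \<in> Pset" by (rule_tac P_add) auto
    thus False using assms by (simp add: add.assoc)
  qed
  have "card (?C \<union> Pset) = CARD('a)" using card_Un_disjoint[OF _ _ disj] cC card_P by simp
  hence "?C \<union> Pset = UNIV" by (intro card_subset_eq) auto
  hence "y \<in> ?C" using assms by auto
  then obtain z where "z \<in> Pset" "y = x + z" by auto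
  thus ?thesis by (simp add: add.assoc[symmetric])
qed

end


lemma smult_smult[simp]: "d *s (c *s (w::'a::field^'n)) = (d*c) *s w" by (simp add: vec_eq_iff)

lemma pt_mem: "v \<in> pt w \<longleftrightarrow> (\<exists>c. c \<noteq> 0 \<and> v = c *s w)"
  by (auto simp: pt_def vsmult_eq)

lemma self_pt: "v \<in> pt v" by (auto simp: pt_mem intro: exI[of _ 1])

lemma pt_eq: assumes "pt v = pt w" shows "\<exists>c. c \<noteq> 0 \<and> v = c *s w"
  using self_pt[of v] assms pt_mem by metis

lemma pt_eqI: assumes "c \<noteq> 0" "v = c *s w" shows "pt v = pt w"
proof -
  have "x \<in> pt v \<longleftrightarrow> x \<in> pt w" for x
  proof
    assume "x \<in> pt v" then obtain d where "d \<noteq> 0" "x = d *s v" by (auto simp: pt_mem)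
    thus "x \<in> pt w" using assms by (auto simp: pt_mem intro!: exI[of _ "d*c"])
  next
    assume "x \<in> pt w" then obtain d where "d \<noteq> 0" "x = d *s w" by (auto simp: pt_mem)
    thus "x \<in> pt v" using assms by (auto simp: pt_mem intro!: exI[of _ "d/c"])
  qed
  thus ?thesis by blast
qed

lemma sec_mem: assumes "v \<noteq> 0"
  shows "pt v \<in> solid_section A h \<longleftrightarrow> qform A v = 0 \<and> lin h v = 0"
proof
  assume "pt v \<in> solid_section A h"
  then obtain u where u: "pt v = pt u" "u \<noteq> 0" "qform A u = 0" "lin h u = 0" by (auto simp: solid_section_def)
  then obtain c where "v = c *s u" using pt_eq by blast
  thus "qform A v = 0 \<and> lin h v = 0" using u by (simp add: qform_smult lin_smult)
qed (use assms in \<open>auto simp: solid_section_def\<close>)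

lemma sec_elem: "X \<in> solid_section A h \<Longrightarrow> \<exists>v. v \<noteq> 0 \<and> X = pt v \<and> qform A v = 0 \<and> lin h v = 0"
  by (auto simp: solid_section_def)

lemma ker_eq_section: assumes "\<forall>v. lin h' v = 0 \<longleftrightarrow> lin h v = 0"
  shows "solid_section A h' = solid_section A h"
  using assms by (auto simp: solid_section_def)

lemma nonzero_lin: "h \<noteq> 0 \<longleftrightarrow> (\<exists>v. lin h v \<noteq> 0)"
  using lin_zero_imp[of h] by auto

lemma ker_eq_elliptic: assumes "\<forall>v. lin h' v = 0 \<longleftrightarrow> lin h v = 0"
  shows "elliptic_solid A h' \<longleftrightarrow> elliptic_solid A h"
proof -
  have "h' \<noteq> 0 \<longleftrightarrow> h \<noteq> 0" using assms nonzero_lin by metis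
  thus ?thesis using assms unfolding elliptic_solid_def by simp
qed

lemma indep_of: assumes "x \<noteq> 0" "\<forall>c. y \<noteq> c *s x" shows "lin_indep2 x y"
  unfolding lin_indep2_def vadd_eq vsmult_eq
proof (intro allI impI)
  fix a b assume ab: "a *s x + b *s y = 0"
  show "a = 0 \<and> b = 0"
  proof (cases "b = 0")
    case True thus ?thesis using ab assms(1) by (auto simp: vec_eq_iff)
  next
    case False
    have "y $ i = (- a / b) * x $ i" for i
    proof -
      have "a * x$i + b * y$i = 0" using ab by (simp add: vec_eq_iff)
      thus ?thesis using False by (simp add: field_simps) (metis add.commute add_eq_0_iff2)
    qed
    hence "y = (- a / b) *s x" by (simp add: vec_eq_iff)
    thus ?thesis using assms(2) by blast
  qed
qed

context c2 begin

lemma noline: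
  assumes "elliptic_solid A h" "lin h x = 0" "lin h y = 0" "Q x = 0" "Q y = 0" "f x y = 0" "x \<noteq> 0"
  shows "\<exists>c. y = c *s x"
proof (rule ccontr)
  assume "\<not> ?thesis"
  hence li: "lin_indep2 x y" using indep_of assms(7) by blast
  have "\<forall>a b. Q (vadd (vsmult a x) (vsmult b y)) = 0"
    using assms by (simp add: vadd_eq vsmult_eq qform_add qform_smult polar_smult1 polar_smult2)
  thus False using assms(1) li assms(2,3) unfolding elliptic_solid_def by blast
qed

lemma second_point:
  assumes "Q x = 0" "f x w \<noteq> 0"
  defines "z \<equiv> (Q w / f x w) *s x + w"
  shows "Q z = 0" "f x z = f x w"
  using assms by (simp_all add: qform_add qform_smult polar_smult1 polar_smult2 polar_add2)

lemma ell_nondeg: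
  assumes "elliptic_solid A h" "x \<noteq> 0" "lin h x = 0" "Q x = 0"
  shows "\<exists>w. lin h w = 0 \<and> f x w \<noteq> 0"
  using assms unfolding elliptic_solid_def by blast

lemma ell_nonzero: "elliptic_solid A h \<Longrightarrow> \<exists>e. lin h e \<noteq> 0"
  unfolding elliptic_solid_def using nonzero_lin by blast

end

lemma card_UNIV5: "card (UNIV :: ('a::{field,finite}^5) set) = CARD('a)^5"
  by simp



locale geo = c2 + assumes parab: "parabolic A"
begin

definition "Nuc = (SOME N. N \<noteq> 0 \<and> (\<forall>v. f N v = 0))"

lemma Nuc_ex: "\<exists>N. N \<noteq> 0 \<and> (\<forall>v. f N v = 0)"
proof -
  have "card (UNIV::('a^5) set) = CARD('a)^(2*2+1)" by simp
  then obtain r where "r \<noteq> (0::'a^5)" "\<forall>v\<in>UNIV. f r v = 0" using radical[OF subsp_UNIV] by blast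
  thus ?thesis by blast
qed

lemma Nuc0: "Nuc \<noteq> 0 \<and> (\<forall>v. f Nuc v = 0)"
  unfolding Nuc_def by (rule someI_ex[OF Nuc_ex])
lemma Nuc: "Nuc \<noteq> 0" "f Nuc v = 0" "f v Nuc = 0"
  using Nuc0 polar_sym[of A v Nuc] by auto

lemma vsum0: "a + b = 0 \<Longrightarrow> a = (b::'a^5)"
proof -
  assume "a + b = 0"
  hence "(a + b) + b = b" by simp
  thus ?thesis by (simp add: add.assoc)
qed

lemma cN: "Q Nuc \<noteq> 0"
  using parab Nuc unfolding parabolic_def by blast

lemma rad_span: assumes "\<forall>v. f r v = 0" shows "\<exists>g. r = g *s Nuc"
proof (rule ccontr)
  assume nr: "\<not> ?thesis"
  obtain s where s: "s^2 = Q r / Q Nuc" using sqrt_ex by blast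
  let ?z = "r + s *s Nuc"
  have "Q ?z = Q r + s^2 * Q Nuc" by (simp add: qform_add qform_smult polar_smult2 Nuc)
  hence qz: "Q ?z = 0" using s cN by simp
  have "?z \<noteq> 0"
  proof
    assume "?z = 0" hence "r = s *s Nuc" by (rule vsum0)
    thus False using nr by blast
  qed
  moreover have "\<forall>w. f ?z w = 0" using assms by (simp add: polar_add1 polar_smult1 Nuc)
  ultimately show False using parab qz unfolding parabolic_def by blast
qed

lemma make_singular: assumes "\<forall>g. u \<noteq> g *s Nuc"
  shows "\<exists>s. Q (u + s *s Nuc) = 0 \<and> u + s *s Nuc \<noteq> 0"
proof -
  obtain s where s: "s^2 = Q u / Q Nuc" using sqrt_ex by blast
  have "Q (u + s *s Nuc) = Q u + s^2 * Q Nuc" by (simp add: qform_add qform_smult polar_smult2 Nuc)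
  hence "Q (u + s *s Nuc) = 0" using s cN by simp
  moreover have "u + s *s Nuc \<noteq> 0"
  proof
    assume "u + s *s Nuc = 0" hence "u = s *s Nuc" by (rule vsum0)
    thus False using assms by blast
  qed
  ultimately show ?thesis by blast
qed

lemma card_ker: fixes h :: "'a^5" assumes "lin h e \<noteq> 0" shows "card {v. lin h v = 0} = CARD('a)^4"
proof -
  have "card (UNIV::('a^5) set) = CARD('a) * card {v\<in>UNIV. lin h v = 0}"
    using count_ker[of UNIV "lin h" e] subsp_UNIV linf_lin assms by auto
  hence "CARD('a) * CARD('a)^4 = CARD('a) * card {v. lin h v = 0}" by (simp add: power_Suc[symmetric])
  thus ?thesis using card_ge2[where 'a='a] by simp
qed

lemma outside_span: assumes "subsp S" "card S > CARD('a)" shows "\<exists>u\<in>S. \<forall>g. u \<noteq> g *s Nuc"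
  using exists_outside[OF assms Nuc(1)] by (auto simp: span1_def)

lemma ell_N: assumes E: "elliptic_solid A h" shows "lin h Nuc \<noteq> 0"
proof
  assume hN: "lin h Nuc = 0"
  define S where "S = {v. lin h v = 0}"
  have sS: "subsp S" unfolding S_def using subsp_ker[OF subsp_UNIV linf_lin] by simp
  obtain e where e: "lin h e \<noteq> 0" using ell_nonzero[OF E] by blast
  have cS: "card S = CARD('a)^4" unfolding S_def using card_ker[OF e] .
  have q2: "CARD('a) \<ge> 2" by (rule card_ge2)
  have "CARD('a) < CARD('a)^4"
  proof -
    have "CARD('a)^1 < CARD('a)^4" using q2 by (intro power_strict_increasing) auto
    thus ?thesis by simp
  qed
  then obtain u where u: "u \<in> S" "\<forall>g. u \<noteq> g *s Nuc" using outside_span[OF sS] cS by auto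
  obtain s where s: "Q (u + s *s Nuc) = 0" "u + s *s Nuc \<noteq> 0" using make_singular[OF u(2)] by blast
  define y where "y = u + s *s Nuc"
  have yS: "lin h y = 0" using u(1) hN by (simp add: y_def S_def lin_add lin_smult)
  obtain w where w: "lin h w = 0" "f y w \<noteq> 0" using ell_nondeg[OF E s(2)[folded y_def] yS s(1)[folded y_def]] by blast
  define z where "z = (Q w / f y w) *s y + w"
  have zQ: "Q z = 0" and fyz: "f y z \<noteq> 0" using second_point[OF s(1)[folded y_def] w(2)] w(2) by (simp_all add: z_def)
  have zS: "lin h z = 0" using yS w(1) by (simp add: z_def lin_add lin_smult)
  define S1 where "S1 = {v\<in>S. f y v = 0}"
  define U where "U = {v\<in>S1. f z v = 0}"
  have sS1: "subsp S1" unfolding S1_def by (rule subsp_ker[OF sS linf_polar])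
  have sU: "subsp U" unfolding U_def by (rule subsp_ker[OF sS1 linf_polar])
  have c1: "card S = CARD('a) * card S1" unfolding S1_def
    by (rule count_ker[OF sS linf_polar _ fyz]) (simp add: S_def zS)
  have yS1: "y \<in> S1" using yS by (simp add: S1_def S_def)
  have fzy: "f z y \<noteq> 0" using fyz polar_sym by metis
  have c2: "card S1 = CARD('a) * card U" unfolding U_def
    by (rule count_ker[OF sS1 linf_polar yS1 fzy])
  have cU: "card U = CARD('a)^2"
  proof -
    have "CARD('a) * (CARD('a) * card U) = CARD('a) * (CARD('a) * CARD('a)^2)"
      using cS c1 c2 by (simp add: power_Suc[symmetric] power_add[symmetric])
    thus ?thesis using q2 by simp
  qed
  have "CARD('a) < CARD('a)^2" using q2 by (simp add: power2_eq_square)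
  then obtain u' where u': "u' \<in> U" "\<forall>g. u' \<noteq> g *s Nuc" using outside_span[OF sU] cU by auto
  obtain s' where s': "Q (u' + s' *s Nuc) = 0" "u' + s' *s Nuc \<noteq> 0" using make_singular[OF u'(2)] by blast
  define y' where "y' = u' + s' *s Nuc"
  have y'prop: "lin h y' = 0" "f y y' = 0" "f z y' = 0"
    using u'(1) hN by (auto simp: y'_def U_def S1_def S_def lin_add lin_smult polar_add2 polar_smult2 Nuc)
  obtain k where k: "y' = k *s y"
    using noline[OF E yS y'prop(1) s(1)[folded y_def] s'(1)[folded y'_def] y'prop(2) s(2)[folded y_def]] by blast
  hence "f z y' = k * f z y" by (simp add: polar_smult2)
  hence "k = 0" using y'prop(3) fzy by simp
  hence "y' = 0" using k by simp
  thus False using s'(2) y'_def by simp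
qed

end


context c2 begin
lemma ssum0: "a + b = 0 \<Longrightarrow> a = (b::'a)"
proof -
  assume "a + b = 0"
  hence "(a + b) + b = b" by simp
  thus ?thesis by (simp add: add.assoc)
qed
end

locale two = geo + fixes h1 h2 :: "'a^5"
  assumes E1: "elliptic_solid A h1" and E2: "elliptic_solid A h2"
    and n1: "lin h1 Nuc = 1" and n2: "lin h2 Nuc = 1"
    and dist: "solid_section A h1 \<noteq> solid_section A h2"
    and conic: "nondeg_conic A (solid_section A h1 \<inter> solid_section A h2)"
begin

lemma e12: "\<exists>e. lin h1 e = 0 \<and> lin h2 e \<noteq> 0"
proof (rule ccontr)
  assume "\<not> ?thesis"
  hence "\<forall>v. lin h1 v = 0 \<longrightarrow> lin h2 v = 0" by blast
  then obtain a where a: "\<forall>v. lin h2 v = a * lin h1 v" using K1[OF linf_lin linf_lin] by blast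
  hence "a = 1" using a[rule_format, of Nuc] n1 n2 by simp
  hence "\<forall>v. lin h2 v = 0 \<longleftrightarrow> lin h1 v = 0" using a by simp
  thus False using ker_eq_section dist by metis
qed

definition "sig = {v. lin h1 v = 0 \<and> lin h2 v = 0}"

lemma subsp_sig: "subsp sig"
proof -
  have "subsp {v\<in>{v\<in>UNIV. lin h1 v = 0}. lin h2 v = 0}"
    by (intro subsp_ker subsp_UNIV linf_lin)
  thus ?thesis unfolding sig_def by simp
qed

lemma card_sig: "card sig = CARD('a)^3"
proof -
  obtain e where e: "lin h1 e = 0" "lin h2 e \<noteq> 0" using e12 by blast
  have s1: "subsp {v\<in>UNIV. lin h1 v = 0}" by (intro subsp_ker subsp_UNIV linf_lin)
  have "card {v\<in>UNIV. lin h1 v = 0} = CARD('a) * card {v\<in>{v\<in>UNIV. lin h1 v = 0}. lin h2 v = 0}"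
    by (rule count_ker[OF s1 linf_lin]) (use e in auto)
  moreover have "card {v\<in>UNIV. lin h1 v = 0} = CARD('a)^4" using card_ker[of h1 Nuc] n1 by simp
  ultimately have "CARD('a) * CARD('a)^3 = CARD('a) * card sig" unfolding sig_def by (simp add: power_Suc[symmetric])
  thus ?thesis using card_ge2[where 'a='a] by simp
qed

lemma ell_ex: "\<exists>l. l \<noteq> 0 \<and> lin h1 l = 0 \<and> lin h2 l = 0 \<and> (\<forall>v. f l v = lin h1 v + lin h2 v)"
proof -
  have "card sig = CARD('a)^(2*1+1)" using card_sig by simp
  then obtain r where r: "r \<in> sig" "r \<noteq> 0" "\<forall>v\<in>sig. f r v = 0" using radical[OF subsp_sig] by blast
  have "\<forall>v. lin h1 v = 0 \<and> lin h2 v = 0 \<longrightarrow> f r v = 0" using r(3) by (simp add: sig_def)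
  then obtain a b where ab: "\<forall>v. f r v = a * lin h1 v + b * lin h2 v" using K2[OF linf_lin linf_lin linf_polar] by blast
  have "a + b = 0" using ab[rule_format, of Nuc] n1 n2 Nuc by simp
  hence ba: "b = a" using ssum0 by metis
  have "a \<noteq> 0"
  proof
    assume "a = 0"
    hence "\<forall>v. f r v = 0" using ab ba by simp
    then obtain g where g: "r = g *s Nuc" using rad_span by blast
    have "lin h1 r = 0" using r(1) by (simp add: sig_def)
    hence "g = 0" using g n1 by (simp add: lin_smult)
    thus False using g r(2) by simp
  qed
  define l where "l = (1/a) *s r"
  have "l \<noteq> 0" using r(2) \<open>a \<noteq> 0\<close> by (simp add: l_def vec_eq_iff)
  moreover have "lin h1 l = 0 \<and> lin h2 l = 0" using r(1) by (simp add: l_def sig_def lin_smult)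
  moreover have "\<forall>v. f l v = lin h1 v + lin h2 v"
    using ab ba \<open>a \<noteq> 0\<close> by (simp add: l_def polar_smult1 field_simps)
  ultimately show ?thesis by blast
qed

definition "ell = (SOME l. l \<noteq> 0 \<and> lin h1 l = 0 \<and> lin h2 l = 0 \<and> (\<forall>v. f l v = lin h1 v + lin h2 v))"

lemma ell0: "ell \<noteq> 0 \<and> lin h1 ell = 0 \<and> lin h2 ell = 0 \<and> (\<forall>v. f ell v = lin h1 v + lin h2 v)"
  unfolding ell_def by (rule someI_ex[OF ell_ex])

lemma ell: "ell \<noteq> 0" "lin h1 ell = 0" "lin h2 ell = 0" "f ell v = lin h1 v + lin h2 v"
  using ell0 by auto

lemma d_nz: "Q ell \<noteq> 0"
proof
  assume q: "Q ell = 0"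
  have "pt ell \<in> solid_section A h1 \<inter> solid_section A h2" using ell q by (simp add: sec_mem)
  moreover obtain k1 k2 where k: "solid_section A h1 \<inter> solid_section A h2 =
     {pt v | v. v \<noteq> 0 \<and> Q v = 0 \<and> lin k1 v = 0 \<and> lin k2 v = 0}"
    and nd: "\<forall>v. v \<noteq> 0 \<and> lin k1 v = 0 \<and> lin k2 v = 0 \<and> Q v = 0 \<longrightarrow>
        (\<exists>w. lin k1 w = 0 \<and> lin k2 w = 0 \<and> f v w \<noteq> 0)"
    using conic unfolding nondeg_conic_def by blast
  ultimately obtain u where u: "pt ell = pt u" "u \<noteq> 0" "Q u = 0" "lin k1 u = 0" "lin k2 u = 0" by auto
  obtain c where "ell = c *s u" using pt_eq[OF u(1)] by blast
  hence lk: "lin k1 ell = 0" "lin k2 ell = 0" using u by (simp_all add: lin_smult)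
  obtain w where w: "lin k1 w = 0" "lin k2 w = 0" "f ell w \<noteq> 0" using nd ell(1) lk q by blast
  define z where "z = (Q w / f ell w) *s ell + w"
  have zq: "Q z = 0" and fz: "f ell z = f ell w" using second_point[OF q w(3)] by (simp_all add: z_def)
  have zk: "lin k1 z = 0" "lin k2 z = 0" using lk w by (simp_all add: z_def lin_add lin_smult)
  have z0: "z \<noteq> 0" using fz w(3) by auto
  have "pt z \<in> solid_section A h1 \<inter> solid_section A h2" unfolding k using z0 zq zk by blast
  hence "lin h1 z = 0" "lin h2 z = 0" using sec_mem[OF z0] by auto
  hence "f ell z = 0" using ell(4) by simp
  thus False using fz w(3) by simp
qed

end


context c2 begin

lemma transfer_elliptic:
  fixes T :: "'a^5 \<Rightarrow> 'a^5" and h h' :: "'a^5"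
  assumes E: "elliptic_solid A h"
    and Tadd: "\<And>x y. T (x + y) = T x + T y" and Tsm: "\<And>c x. T (c *s x) = c *s T x"
    and TT: "\<And>x. T (T x) = x" and TQ: "\<And>x. Q (T x) = Q x"
    and l1: "\<And>v. lin h (T v) = lin h' v" and l2: "\<And>v. lin h' (T v) = lin h v"
  shows "elliptic_solid A h'"
proof -
  have T0: "T 0 = 0" using Tsm[of 0 0] by simp
  have Tf: "f (T x) (T y) = f x y" for x y
    using TQ[of "x+y"] unfolding Tadd by (simp add: qform_add TQ)
  obtain e where e: "lin h e \<noteq> 0" using ell_nonzero[OF E] by blast
  have "h' \<noteq> 0" using e l2[of e] nonzero_lin by metis
  moreover have "\<exists>w. lin h' w = 0 \<and> f v w \<noteq> 0" if v: "v \<noteq> 0" "lin h' v = 0" "Q v = 0" for v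
  proof -
    have "T v \<noteq> 0" using v(1) TT[of v] T0 by auto
    moreover have "lin h (T v) = 0" "Q (T v) = 0" using v l1 TQ by auto
    ultimately obtain w where w: "lin h w = 0" "f (T v) w \<noteq> 0" using ell_nondeg[OF E] by blast
    have "lin h' (T w) = 0" using w l2 by simp
    moreover have "f v (T w) \<noteq> 0" using Tf[of "T v" w] TT w(2) by simp
    ultimately show ?thesis by blast
  qed
  moreover have "\<not> (\<exists>u w. lin_indep2 u w \<and> lin h' u = 0 \<and> lin h' w = 0 \<and>
           (\<forall>a b. Q (vadd (vsmult a u) (vsmult b w)) = 0))"
  proof
    assume "\<exists>u w. lin_indep2 u w \<and> lin h' u = 0 \<and> lin h' w = 0 \<and> (\<forall>a b. Q (vadd (vsmult a u) (vsmult b w)) = 0)"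
    then obtain u w where uw: "lin_indep2 u w" "lin h' u = 0" "lin h' w = 0" "\<forall>a b. Q (a *s u + b *s w) = 0"
      by (auto simp: vadd_eq vsmult_eq)
    have "lin_indep2 (T u) (T w)" unfolding lin_indep2_def vadd_eq vsmult_eq
    proof (intro allI impI)
      fix a b assume "a *s T u + b *s T w = 0"
      hence "T (a *s u + b *s w) = 0" by (simp add: Tadd Tsm)
      hence "a *s u + b *s w = 0" using TT[of "a *s u + b *s w"] T0 by simp
      thus "a = 0 \<and> b = 0" using uw(1) unfolding lin_indep2_def vadd_eq vsmult_eq by blast
    qed
    moreover have "lin h (T u) = 0" "lin h (T w) = 0" using uw l1 by auto
    moreover have "\<forall>a b. Q (vadd (vsmult a (T u)) (vsmult b (T w))) = 0"
      using uw(4) by (simp add: vadd_eq vsmult_eq Tadd[symmetric] Tsm[symmetric] TQ)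
    ultimately show False using E unfolding elliptic_solid_def by blast
  qed
  ultimately show ?thesis unfolding elliptic_solid_def by blast
qed

end

locale pt3 = two + fixes x0 :: "'a^5"
  assumes x0: "x0 \<noteq> 0" "Q x0 = 0" "lin h1 x0 = 0"
begin

definition "t0 = f ell x0"
definition "Gv = (SOME G. \<forall>v. lin G v = f x0 v)"
lemma Gv: "lin Gv v = f x0 v"
  using someI_ex[OF polar_rep[of A x0]] unfolding Gv_def by blast
definition "H a = h1 + a *s Gv"
lemma linH: "lin (H a) v = lin h1 v + a * f x0 v"
  by (simp add: H_def lin_addh lin_smulth Gv)

lemma h2x0: "lin h2 x0 = t0"
  using ell(4)[of x0] x0(3) by (simp add: t0_def)

lemma fx0ell: "f x0 ell = t0" by (simp add: t0_def polar_sym)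

definition "pp a = (a *s x0 + ell) + (a*t0) *s Nuc"

lemma Qpp: "Q (pp a) = Q Nuc * (a*t0)^2 + a*t0 + Q ell"
  by (simp add: pp_def qform_add qform_smult polar_add1 polar_add2 polar_smult1 polar_smult2 Nuc x0 fx0ell
      algebra_simps power2_eq_square)

lemma fpp: "f (pp a) v = lin (H a) v + lin h2 v"
  by (simp add: pp_def polar_add1 polar_smult1 Nuc ell(4) linH add.assoc)

lemma Hpp: "lin (H a) (pp a) = 0"
  by (simp add: pp_def linH lin_add lin_smult polar_add2 polar_smult2 Nuc x0 ell fx0ell n1)

lemma h2pp: "lin h2 (pp a) = 0"
  by (simp add: pp_def lin_add lin_smult Nuc x0 ell h2x0 n2)

lemma h1pp: "lin h1 (pp a) = a * t0"
  by (simp add: pp_def lin_add lin_smult x0 ell n1)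

lemma HN: "lin (H a) Nuc = 1" by (simp add: linH n1 Nuc)

end


context c2 begin

lemma tangent_perp:
  assumes X: "solid_section A h \<inter> solid_section A k = {pt x}" and x: "x \<noteq> 0" "Q x = 0"
    and v: "lin h v = 0" "lin k v = 0"
  shows "f x v = 0"
proof (rule ccontr)
  assume fv: "f x v \<noteq> 0"
  have hx: "lin h x = 0" "lin k x = 0" using X sec_mem[OF x(1)] by auto
  define z where "z = (Q v / f x v) *s x + v"
  have zq: "Q z = 0" and fz: "f x z = f x v" using second_point[OF x(2) fv] by (simp_all add: z_def)
  have z0: "z \<noteq> 0" using fz fv by auto
  have "lin h z = 0" "lin k z = 0" using hx v by (simp_all add: z_def lin_add lin_smult)
  hence "pt z \<in> solid_section A h \<inter> solid_section A k" using sec_mem[OF z0] zq by simp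
  hence "pt z = pt x" using X by simp
  then obtain c where "z = c *s x" using pt_eq by blast
  hence "f x z = 0" by (simp add: polar_smult2)
  thus False using fz fv by simp
qed

lemma other_point:
  assumes E: "elliptic_solid A h" and x: "x \<noteq> 0" "Q x = 0" "lin h x = 0"
  shows "\<exists>z. z \<noteq> 0 \<and> Q z = 0 \<and> lin h z = 0 \<and> f x z \<noteq> 0"
proof -
  obtain w where w: "lin h w = 0" "f x w \<noteq> 0" using ell_nondeg[OF E x(1,3,2)] by blast
  define z where "z = (Q w / f x w) *s x + w"
  have zq: "Q z = 0" and fz: "f x z = f x w" using second_point[OF x(2) w(2)] by (simp_all add: z_def)
  have "lin h z = 0" using x w by (simp add: z_def lin_add lin_smult)
  thus ?thesis using zq fz w(2) by (intro exI[of _ z]) auto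
qed

lemma tangent_at:
  assumes E: "elliptic_solid A k" and x: "x \<noteq> 0" "Q x = 0" "lin h x = 0" "lin k x = 0"
    and perp: "\<And>v. lin h v = 0 \<Longrightarrow> lin k v = 0 \<Longrightarrow> f x v = 0"
  shows "solid_section A h \<inter> solid_section A k = {pt x}"
proof
  show "{pt x} \<subseteq> solid_section A h \<inter> solid_section A k" using x sec_mem[OF x(1)] by simp
  show "solid_section A h \<inter> solid_section A k \<subseteq> {pt x}"
  proof
    fix X assume "X \<in> solid_section A h \<inter> solid_section A k"
    then obtain v where v: "v \<noteq> 0" "X = pt v" "Q v = 0" "lin h v = 0" using sec_elem by blast
    hence "lin k v = 0" using \<open>X \<in> _\<close> sec_mem by auto
    then obtain c where c: "v = c *s x" using noline[OF E x(4) _ x(2) v(3) perp[OF v(4)] x(1)] by blast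
    have "c \<noteq> 0" using v(1) c by auto
    thus "X \<in> {pt x}" using pt_eqI[OF _ c] v(2) by simp
  qed
qed

lemma ne_section:
  assumes E: "elliptic_solid A k" and x: "x \<noteq> 0" "Q x = 0" "lin k x = 0"
    and I: "solid_section A h \<inter> solid_section A k = {pt x}"
  shows "solid_section A h \<noteq> solid_section A k"
proof
  assume eq: "solid_section A h = solid_section A k"
  obtain z where z: "z \<noteq> 0" "Q z = 0" "lin k z = 0" "f x z \<noteq> 0" using other_point[OF E x] by blast
  have "pt z \<in> solid_section A h \<inter> solid_section A k" using eq z sec_mem[OF z(1)] by simp
  hence "pt z = pt x" using I by simp
  then obtain c where "z = c *s x" using pt_eq by blast
  thus False using z(4) by (simp add: polar_smult2)
qed

end

context pt3 begin

lemma construct: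
  assumes a: "a \<noteq> 0" and eq: "Q Nuc * (a*t0)^2 + a*t0 + Q ell = 0"
  shows "elliptic_solid A (H a)" "pt x0 \<in> solid_section A (H a)"
    "tangent (solid_section A (H a)) (solid_section A h1)"
    "tangent (solid_section A (H a)) (solid_section A h2)"
proof -
  define m where "m = (Q Nuc * a^2) *s x0 + a *s Nuc"
  define T where "T = (\<lambda>v. v + f x0 v *s m)"
  have fm: "f x0 m = 0" by (simp add: m_def polar_add2 polar_smult2 Nuc)
  have Qm: "Q m = a^2 * Q Nuc" by (simp add: m_def qform_add qform_smult polar_smult1 polar_smult2 x0 Nuc)
  have fvm: "f v m = Q Nuc * a^2 * f x0 v" for v
    by (simp add: m_def polar_add2 polar_smult2 Nuc polar_sym[of A v x0])
  show "elliptic_solid A (H a)"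
  proof (rule transfer_elliptic[OF E1, of T])
    show "T (x + y) = T x + T y" for x y by (simp add: T_def polar_add2 algebra_simps vec_eq_iff)
    show "T (c *s x) = c *s T x" for c x by (simp add: T_def polar_smult2 algebra_simps vec_eq_iff)
    show "T (T x) = x" for x by (simp add: T_def polar_add2 polar_smult2 fm add.assoc)
    show "Q (T x) = Q x" for x
      by (simp add: T_def qform_add qform_smult polar_smult2 Qm fvm power2_eq_square algebra_simps)
    show "lin h1 (T v) = lin (H a) v" for v
      by (simp add: T_def lin_add lin_smult m_def x0 n1 linH mult.commute)
    show "lin (H a) (T v) = lin h1 v" for v
      by (simp add: T_def lin_add lin_smult m_def x0 n1 linH polar_add2 polar_smult2 fm Nuc mult.commute)
  qed
  show "pt x0 \<in> solid_section A (H a)" using sec_mem[OF x0(1)] x0 by (simp add: linH)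
  have Hx0: "lin (H a) x0 = 0" by (simp add: linH x0)
  have I1: "solid_section A (H a) \<inter> solid_section A h1 = {pt x0}"
  proof (rule tangent_at[OF E1 x0(1,2) Hx0 x0(3)])
    fix v assume "lin (H a) v = 0" "lin h1 v = 0"
    thus "f x0 v = 0" using a by (simp add: linH)
  qed
  show "tangent (solid_section A (H a)) (solid_section A h1)"
    unfolding tangent_def using ne_section[OF E1 x0(1,2,3) I1] I1 by blast
  have at0: "a * t0 \<noteq> 0" using eq d_nz by auto
  have p0: "pp a \<noteq> 0"
  proof assume "pp a = 0" hence "lin h1 (pp a) = 0" by simp thus False using h1pp at0 by simp qed
  have Qp: "Q (pp a) = 0" using Qpp eq by simp
  have I2: "solid_section A (H a) \<inter> solid_section A h2 = {pt (pp a)}"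
  proof (rule tangent_at[OF E2 p0 Qp Hpp h2pp])
    fix v assume "lin (H a) v = 0" "lin h2 v = 0"
    thus "f (pp a) v = 0" by (simp add: fpp)
  qed
  show "tangent (solid_section A (H a)) (solid_section A h2)"
    unfolding tangent_def using ne_section[OF E2 p0 Qp h2pp I2] I2 by blast
qed

end


lemma alg1: "(b::'a::field) \<noteq> 0 \<Longrightarrow> Y + (1/b) * (a*X + b*Y) = (Y + Y) + (a/b)*X"
  by (simp add: field_simps)
lemma alg2: "((L::'a::comm_ring) + a*F) + (L + b*F) = (L + L) + (a+b)*F"
  by (simp add: algebra_simps)

context pt3 begin

lemma classify:
  assumes E: "elliptic_solid A h" and xin: "pt x0 \<in> solid_section A h"
    and T1: "tangent (solid_section A h) (solid_section A h1)"
    and T2: "tangent (solid_section A h) (solid_section A h2)"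
  shows "\<exists>a. a \<noteq> 0 \<and> solid_section A h = solid_section A (H a) \<and> Q Nuc * (a*t0)^2 + a*t0 + Q ell = 0"
proof -
  have hx: "lin h x0 = 0" using xin sec_mem[OF x0(1)] by simp
  have x1: "pt x0 \<in> solid_section A h1" using sec_mem[OF x0(1)] x0 by simp
  obtain P where P: "solid_section A h \<inter> solid_section A h1 = {P}" using T1 unfolding tangent_def by blast
  hence I1: "solid_section A h \<inter> solid_section A h1 = {pt x0}" using xin x1 by auto
  have "\<forall>v. lin h v = 0 \<and> lin h1 v = 0 \<longrightarrow> f x0 v = 0"
    using tangent_perp[OF I1 x0(1,2)] by blast
  then obtain \<alpha> \<beta> where ab: "\<forall>v. f x0 v = \<alpha> * lin h v + \<beta> * lin h1 v"
    using K2[OF linf_lin linf_lin linf_polar] by blast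
  have "\<alpha> \<noteq> 0"
  proof
    assume "\<alpha> = 0"
    hence "\<beta> = 0" using ab[rule_format, of Nuc] Nuc n1 by simp
    hence "\<forall>w. f x0 w = 0" using ab \<open>\<alpha> = 0\<close> by simp
    thus False using parab x0 unfolding parabolic_def by blast
  qed
  have "\<beta> \<noteq> 0"
  proof
    assume "\<beta> = 0"
    obtain w where w: "lin h w = 0" "f x0 w \<noteq> 0" using ell_nondeg[OF E x0(1) hx x0(2)] by blast
    thus False using ab \<open>\<beta> = 0\<close> by simp
  qed
  define a where "a = 1 / \<beta>"
  have a0: "a \<noteq> 0" using \<open>\<beta> \<noteq> 0\<close> by (simp add: a_def)
  have lH: "lin (H a) v = (\<alpha> / \<beta>) * lin h v" for v
  proof -
    have "lin (H a) v = lin h1 v + (1/\<beta>) * (\<alpha> * lin h v + \<beta> * lin h1 v)"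
      using ab by (simp add: linH a_def)
    also have "\<dots> = (lin h1 v + lin h1 v) + (\<alpha> / \<beta>) * lin h v"
      by (rule alg1[OF \<open>\<beta> \<noteq> 0\<close>])
    finally show ?thesis by simp
  qed
  have kerEq: "\<forall>v. lin h v = 0 \<longleftrightarrow> lin (H a) v = 0" using lH \<open>\<alpha> \<noteq> 0\<close> \<open>\<beta> \<noteq> 0\<close> by simp
  have secEq: "solid_section A h = solid_section A (H a)" using ker_eq_section[OF kerEq] .
  have "\<exists>P. solid_section A (H a) \<inter> solid_section A h2 = {P}" using T2[unfolded secEq tangent_def] by blast
  then obtain P2 where P2: "solid_section A (H a) \<inter> solid_section A h2 = {P2}" by blast
  have "P2 \<in> solid_section A (H a)" using P2 by blast
  then obtain p0 where p0: "p0 \<noteq> 0" "P2 = pt p0" "Q p0 = 0" "lin (H a) p0 = 0"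
    using sec_elem by blast
  hence I2: "solid_section A (H a) \<inter> solid_section A h2 = {pt p0}" using P2 by simp
  have "\<forall>v. lin (H a) v = 0 \<and> lin h2 v = 0 \<longrightarrow> f p0 v = 0"
    using tangent_perp[OF I2 p0(1,3)] by blast
  then obtain \<mu> \<nu> where mn: "\<forall>v. f p0 v = \<mu> * lin (H a) v + \<nu> * lin h2 v"
    using K2[OF linf_lin linf_lin linf_polar] by blast
  have "\<mu> + \<nu> = 0" using mn[rule_format, of Nuc] Nuc HN n2 by simp
  hence nm: "\<mu> = \<nu>" by (rule ssum0)
  have "\<forall>v. f (p0 + \<mu> *s pp a) v = 0"
  proof
    fix v
    have "f (p0 + \<mu> *s pp a) v = f p0 v + \<mu> * f (pp a) v" by (simp add: polar_add1 polar_smult1)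
    also have "\<dots> = (\<mu> * lin (H a) v + \<mu> * lin h2 v) + (\<mu> * lin (H a) v + \<mu> * lin h2 v)"
      using mn nm fpp by (simp add: distrib_left)
    finally show "f (p0 + \<mu> *s pp a) v = 0" by simp
  qed
  then obtain g where g: "p0 + \<mu> *s pp a = g *s Nuc" using rad_span by blast
  have "lin (H a) (p0 + \<mu> *s pp a) = 0" using p0(4) Hpp by (simp add: lin_add lin_smult)
  hence "g = 0" using g HN by (simp add: lin_smult)
  hence "p0 + \<mu> *s pp a = 0" using g by simp
  hence "p0 = \<mu> *s pp a" by (rule vsum0)
  hence "Q p0 = \<mu>^2 * Q (pp a)" by (simp add: qform_smult)
  moreover have "\<mu> \<noteq> 0" using \<open>p0 = \<mu> *s pp a\<close> p0(1) by auto
  ultimately have "Q (pp a) = 0" using p0(3) by simp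
  thus ?thesis using a0 secEq Qpp by auto
qed

lemma no_common:
  assumes "lin h2 x0 = 0" "elliptic_solid A h" "pt x0 \<in> solid_section A h"
    "tangent (solid_section A h) (solid_section A h1)"
    "tangent (solid_section A h) (solid_section A h2)"
  shows False
proof -
  have "t0 = 0" using assms(1) h2x0 by simp
  thus False using classify[OF assms(2-5)] d_nz by auto
qed

lemma distinct_H:
  assumes "elliptic_solid A (H a)" "a \<noteq> b" "solid_section A (H a) = solid_section A (H b)"
  shows False
proof -
  have Hx0: "lin (H a) x0 = 0" by (simp add: linH x0)
  obtain z where z: "z \<noteq> 0" "Q z = 0" "lin (H a) z = 0" "f x0 z \<noteq> 0"
    using other_point[OF assms(1) x0(1,2) Hx0] by blast
  have "pt z \<in> solid_section A (H a)" using sec_mem[OF z(1)] z by simp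
  hence "pt z \<in> solid_section A (H b)" using assms(3) by simp
  hence "lin (H b) z = 0" using sec_mem[OF z(1)] by simp
  hence "(lin h1 z + a * f x0 z) + (lin h1 z + b * f x0 z) = 0" using z(3) by (simp add: linH)
  hence "(a + b) * f x0 z = 0" unfolding alg2 by simp
  moreover have "a + b \<noteq> 0" using assms(2) ssum0 by blast
  ultimately show False using z(4) by simp
qed

end


lemma Qcomb: "qform A (a *s x + b *s y) = a^2 * qform A x + b^2 * qform A y + a*b*polar A x y"
  by (simp add: qform_add qform_smult polar_smult1 polar_smult2)

lemma keyalg:
  fixes a b c d r al be la :: "'a::field"
  assumes two: "(2::'a) = 0" and d: "d \<noteq> 0" and al: "al \<noteq> 0" and la: "la^2 = al / d"
    and r: "r^2 + r = d*c + al*be"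
  shows "al*(la*(d*a + r*b)/al)^2 + be*(la*b)^2 + (la*(d*a + r*b)/al)*(la*b) = a^2*d + b^2*c + a*b"
proof -
  have "al*(la*(d*a + r*b)/al)^2 + be*(la*b)^2 + (la*(d*a + r*b)/al)*(la*b)
      = (la^2/al) * ((d*a + r*b)^2 + al*be*b^2 + b*(d*a + r*b))"
    using al by (simp add: field_simps power2_eq_square)
  also have "la^2/al = 1/d" using la al d by (simp add: field_simps)
  also have "(d*a + r*b)^2 = d^2*a^2 + (r^2)*b^2 + 2*(d*r*a*b)" by (simp add: power2_eq_square algebra_simps)
  also have "2*(d*r*a*b) = 0" using two by simp
  also have "r^2 = d*c + al*be - r" using r by (simp add: algebra_simps)
  finally have "al*(la*(d*a + r*b)/al)^2 + be*(la*b)^2 + (la*(d*a + r*b)/al)*(la*b)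
      = (1/d) * (d^2*a^2 + (d*c + al*be - r)*b^2 + 0 + al*be*b^2 + b*(d*a + r*b))" .
  also have "\<dots> = (1/d) * (d^2*a^2 + d*c*b^2 + d*a*b + 2*(al*be*b^2))"
    by (simp add: algebra_simps power2_eq_square)
  also have "\<dots> = a^2*d + b^2*c + a*b" using d two by (simp add: field_simps power2_eq_square)
  finally show ?thesis .
qed

context pt3 begin

lemma root_ex: assumes t: "t0 \<noteq> 0" shows "\<exists>s. Q Nuc * s^2 + s + Q ell = 0"
proof (rule ccontr)
  assume nr: "\<not> ?thesis"
  define c where "c = Q Nuc"
  define d where "d = Q ell"
  have c0: "c \<noteq> 0" using cN by (simp add: c_def)
  have d0: "d \<noteq> 0" using d_nz by (simp add: d_def)
  have dcP: "d*c \<notin> Pset"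
  proof
    assume "d*c \<in> Pset"
    then obtain z where z: "d*c = z^2 + z" by (auto simp: Pset_def)
    have "c * (z/c)^2 + z/c + d = (z^2 + z)/c + d" using c0 by (simp add: field_simps power2_eq_square)
    also have "\<dots> = d + d" using z c0 by (simp add: field_simps)
    finally show False using nr by (auto simp: c_def d_def)
  qed
  define y where "y = (1/t0) *s x0 + Nuc"
  have h2y: "lin h2 y = 0" using t by (simp add: y_def lin_add lin_smult h2x0 n2)
  have h1y: "lin h1 y = 1" by (simp add: y_def lin_add lin_smult x0 n1)
  have Qy: "Q y = c" by (simp add: y_def c_def qform_add qform_smult x0 polar_smult1 Nuc)
  have fly: "f ell y = 1" using t by (simp add: y_def polar_add2 polar_smult2 Nuc t0_def)
  define U where "U = {v\<in>sig. f x0 v = 0}"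
  have sU: "subsp U" unfolding U_def by (rule subsp_ker[OF subsp_sig linf_polar])
  have ellsig: "ell \<in> sig" using ell by (simp add: sig_def)
  have "card sig = CARD('a) * card U" unfolding U_def
    by (rule count_ker[OF subsp_sig linf_polar ellsig]) (simp add: fx0ell t)
  hence cU: "card U = CARD('a)^2" using card_sig card_ge2[where 'a='a]
    by (simp add: power2_eq_square numeral_3_eq_3)
  have Umem: "v \<in> U \<longleftrightarrow> lin h1 v = 0 \<and> lin h2 v = 0 \<and> f x0 v = 0" for v
    by (simp add: U_def sig_def)
  have aniso: "v = 0" if vU: "v \<in> U" and vQ: "Q v = 0" for v
  proof -
    have v: "lin h1 v = 0" "lin h2 v = 0" "f x0 v = 0" using vU Umem by auto
    obtain k where "v = k *s x0" using noline[OF E1 x0(3) v(1) x0(2) vQ v(3) x0(1)] by blast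
    moreover hence "k * t0 = 0" using v(2) by (simp add: lin_smult h2x0)
    ultimately show ?thesis using t by simp
  qed
  have q2: "CARD('a) \<ge> 2" by (rule card_ge2)
  have "1 < CARD('a)^2" using q2 by (intro one_less_power) auto
  hence "card U > 1" using cU by simp
  then obtain u1 where u1: "u1 \<in> U" "u1 \<noteq> 0" using exists_nonzero[OF sU] by blast
  define al where "al = Q u1"
  have al0: "al \<noteq> 0" using aniso u1 by (auto simp: al_def)
  have "card U > CARD('a)" using cU q2 by (simp add: power2_eq_square)
  then obtain u where u: "u \<in> U" "u \<notin> span1 u1" using exists_outside[OF sU _ u1(2)] by blast
  define ga where "ga = f u1 u"
  have ga0: "ga \<noteq> 0"
  proof
    assume g: "ga = 0"
    obtain s1 where s1: "s1^2 = Q u" using sqrt_ex by blast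
    obtain s2 where s2: "s2^2 = al" using sqrt_ex by blast
    define v where "v = s1 *s u1 + s2 *s u"
    have "Q v = s1^2 * al + s2^2 * Q u" using g by (simp add: v_def Qcomb al_def ga_def)
    hence Qv: "Q v = 0" using s1 s2 by (simp add: mult.commute)
    have vU: "v \<in> U" using sU u1 u unfolding v_def subsp_def by blast
    hence "v = 0" using aniso Qv by blast
    hence "s2 *s u = s1 *s u1" unfolding v_def using vsum0 by (metis add.commute)
    have "s2 \<noteq> 0" using s2 al0 by auto
    hence "u = (1/s2) *s (s2 *s u)" by simp
    also have "\<dots> = (1/s2) *s (s1 *s u1)" using \<open>s2 *s u = s1 *s u1\<close> by simp
    also have "\<dots> = (s1/s2) *s u1" by simp
    finally have "u = (s1/s2) *s u1" .
    thus False using u(2) by (auto simp: span1_def)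
  qed
  define u2 where "u2 = (1/ga) *s u"
  have u2U: "u2 \<in> U" using sU u unfolding u2_def subsp_def by blast
  have f12: "f u1 u2 = 1" using ga0 by (simp add: u2_def polar_smult2 ga_def)
  define be where "be = Q u2"
  have abP: "al*be \<notin> Pset"
  proof
    assume "al*be \<in> Pset"
    then obtain z where z: "al*be = z^2 + z" by (auto simp: Pset_def)
    define v where "v = (z/al) *s u1 + 1 *s u2"
    have "Q v = (z/al)^2 * al + 1^2 * be + (z/al)*1*f u1 u2" unfolding v_def Qcomb al_def be_def ..
    hence "Q v = (z/al)^2 * al + be + (z/al)" by (simp add: f12)
    also have "\<dots> = (z^2 + z)/al + be" using al0 by (simp add: field_simps power2_eq_square)
    also have "\<dots> = be + be" using z al0 by (simp add: field_simps)
    finally have "Q v = 0" by simp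
    moreover have "v \<in> U" using sU u1 u2U unfolding v_def subsp_def by blast
    ultimately have "v = 0" using aniso by blast
    hence "f u1 v = 0" by simp
    moreover have "f u1 v = 1" by (simp add: v_def polar_add2 polar_smult2 f12)
    ultimately show False by simp
  qed
  have "d*c + al*be \<in> Pset" by (rule P_index2[OF dcP abP])
  then obtain r where r: "r^2 + r = d*c + al*be" by (auto simp: Pset_def)
  obtain la where la: "la^2 = al/d" using sqrt_ex by blast
  define v1 where "v1 = ell + (la*d/al) *s u1"
  define v2 where "v2 = (y + (la*r/al) *s u1) + la *s u2"
  have u1m: "lin h1 u1 = 0" "lin h2 u1 = 0" "f x0 u1 = 0" using u1(1) Umem by auto
  have u2m: "lin h1 u2 = 0" "lin h2 u2 = 0" "f x0 u2 = 0" using u2U Umem by auto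
  have fe1: "f ell u1 = 0" "f ell u2 = 0" using u1m u2m by (simp_all add: ell(4))
  have fy1: "f y u1 = 0" "f y u2 = 0" using u1m u2m
    by (simp_all add: y_def polar_add1 polar_smult1 Nuc)
  have Qall: "Q (a *s v1 + b *s v2) = 0" for a b
  proof -
    define p1 where "p1 = la*(d*a + r*b)/al"
    define p2 where "p2 = la*b"
    have eqv: "a *s v1 + b *s v2 = (a *s ell + b *s y) + (p1 *s u1 + p2 *s u2)"
      using al0 by (simp add: v1_def v2_def p1_def p2_def vec_eq_iff field_simps)
    have fPW: "f (a *s ell + b *s y) (p1 *s u1 + p2 *s u2) = 0"
      by (simp add: polar_add1 polar_add2 polar_smult1 polar_smult2 fe1 fy1)
    have QP: "Q (a *s ell + b *s y) = a^2*d + b^2*c + a*b"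
      by (simp add: Qcomb d_def Qy fly)
    have QW: "Q (p1 *s u1 + p2 *s u2) = al*p1^2 + be*p2^2 + p1*p2"
      by (simp add: Qcomb al_def be_def f12 mult.commute)
    have "al*p1^2 + be*p2^2 + p1*p2 = a^2*d + b^2*c + a*b"
      unfolding p1_def p2_def by (rule keyalg[OF two_zero d0 al0 la r])
    hence "Q (a *s v1 + b *s v2) = (a^2*d + b^2*c + a*b) + (a^2*d + b^2*c + a*b)"
      unfolding eqv qform_add[of A "a *s ell + b *s y" "p1 *s u1 + p2 *s u2"] QP QW fPW by simp
    thus ?thesis by simp
  qed
  have h2v: "lin h2 v1 = 0" "lin h2 v2 = 0"
    using u1m u2m ell h2y by (simp_all add: v1_def v2_def lin_add lin_smult)
  have li: "lin_indep2 v1 v2" unfolding lin_indep2_def vadd_eq vsmult_eq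
  proof (intro allI impI)
    fix a b assume ab: "a *s v1 + b *s v2 = 0"
    have "lin h1 (a *s v1 + b *s v2) = b"
      using u1m u2m ell h1y by (simp add: v1_def v2_def lin_add lin_smult)
    hence b0: "b = 0" using ab by simp
    have "f x0 (a *s v1 + b *s v2) = a * t0"
      using u1m b0 by (simp add: v1_def polar_add2 polar_smult2 fx0ell)
    hence "a = 0" using ab t by simp
    thus "a = 0 \<and> b = 0" using b0 by simp
  qed
  have "\<forall>a b. Q (vadd (vsmult a v1) (vsmult b v2)) = 0" using Qall by (simp add: vadd_eq vsmult_eq)
  thus False using E2 li h2v unfolding elliptic_solid_def by blast
qed

end


lemma even_invol:
  assumes "finite S" "\<forall>x\<in>S. g x \<in> S \<and> g x \<noteq> x \<and> g (g x) = x"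
  shows "even (card S)"
  using assms
proof (induction "card S" arbitrary: S rule: less_induct)
  case less
  show ?case
  proof (cases "S = {}")
    case True thus ?thesis by simp
  next
    case False
    then obtain x where x: "x \<in> S" by blast
    define S' where "S' = S - {x, g x}"
    have gx: "g x \<in> S" "g x \<noteq> x" using less.prems x by auto
    have cS: "card S = card S' + 2"
    proof -
      have "{x, g x} \<subseteq> S" using x gx by auto
      hence "card S' = card S - card {x, g x}" unfolding S'_def using less.prems(1) by (simp add: card_Diff_subset)
      moreover have "card {x, g x} = 2" using gx(2) by simp
      moreover have "card {x, g x} \<le> card S" using \<open>{x, g x} \<subseteq> S\<close> less.prems(1) by (intro card_mono)
      ultimately show ?thesis by simp
    qed
    have "\<forall>y\<in>S'. g y \<in> S' \<and> g y \<noteq> y \<and> g (g y) = y"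
      using less.prems(2) x unfolding S'_def by auto (metis)+
    hence "even (card S')" using less.hyps[of S'] cS less.prems(1) unfolding S'_def by simp
    thus ?thesis using cS by simp
  qed
qed

lemma char2_of_card:
  assumes q: "CARD('a::{field,finite}) = 2 ^ n"
  shows "(1::'a) + 1 = 0"
proof (rule ccontr)
  assume two: "(1::'a) + 1 \<noteq> 0"
  let ?S = "UNIV - {0::'a}"
  have "\<forall>x\<in>?S. - x \<in> ?S \<and> - x \<noteq> x \<and> - (- x) = x"
  proof
    fix x :: 'a assume x: "x \<in> ?S"
    have "- x \<noteq> x"
    proof
      assume "- x = x" hence "(1 + 1) * x = 0" by (simp add: algebra_simps)
      thus False using two x by simp
    qed
    thus "- x \<in> ?S \<and> - x \<noteq> x \<and> - (- x) = x" using x by simp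
  qed
  hence ev: "even (card ?S)" by (rule even_invol[rotated]) simp
  have "CARD('a) = card ?S + 1" by (simp add: card_Diff_subset)
  hence "odd (CARD('a))" using ev by simp
  moreover have "n \<noteq> 0" using q card_ge2[where 'a='a] by (cases n) auto
  ultimately show False using q by simp
qed

lemma ralg1: "((z::'a::comm_ring_1) + z0) * (c*(z + z0) + 1) + (d + d) = (c*z^2 + z + d) + (c*z0^2 + z0 + d) + (c*(z*z0) + c*(z*z0))"
  by (simp add: algebra_simps power2_eq_square)
lemma ralg2: "(c::'a::field) \<noteq> 0 \<Longrightarrow> c*(z0 + 1/c)^2 + (z0 + 1/c) + d = (c*z0^2 + z0 + d) + (z0 + z0) + (1/c + 1/c)"
  by (simp add: field_simps power2_eq_square)

context c2 begin
lemma roots2: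
  fixes c z z0 d :: 'a
  assumes c: "c \<noteq> 0" and z: "c*z^2 + z + d = 0" and z0: "c*z0^2 + z0 + d = 0"
  shows "z = z0 \<or> z = z0 + 1/c"
proof -
  have "(z + z0) * (c*(z + z0) + 1) + (d + d) = (c*z^2 + z + d) + (c*z0^2 + z0 + d) + (c*(z*z0) + c*(z*z0))"
    by (rule ralg1)
  also have "\<dots> = 0" using z z0 by simp
  finally have "z + z0 = 0 \<or> c*(z + z0) + 1 = 0" by simp
  thus ?thesis
  proof
    assume "z + z0 = 0" thus ?thesis using ssum0 by blast
  next
    assume "c*(z + z0) + 1 = 0"
    hence "c*(z + z0) = 1" using ssum0 by blast
    hence "z + z0 = 1/c" using c by (simp add: field_simps)
    have "z = (z + z0) + z0" by (simp add: add.assoc)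
    also have "\<dots> = z0 + 1/c" using \<open>z + z0 = 1/c\<close> by (simp add: add.commute)
    finally show ?thesis by blast
  qed
qed

lemma root_other:
  fixes c z0 d :: 'a
  assumes c: "c \<noteq> 0" and z0: "c*z0^2 + z0 + d = 0"
  shows "c*(z0 + 1/c)^2 + (z0 + 1/c) + d = 0"
proof -
  have "c*(z0 + 1/c)^2 + (z0 + 1/c) + d = (c*z0^2 + z0 + d) + (z0 + z0) + (1/c + 1/c)"
    using c by (rule ralg2)
  thus ?thesis using z0 by simp
qed
end



context geo begin
lemma normalize:
  assumes E: "elliptic_solid A g"
  shows "\<exists>h. elliptic_solid A h \<and> solid_section A h = solid_section A g \<and> lin h Nuc = 1"
proof -
  have gN: "lin g Nuc \<noteq> 0" by (rule ell_N[OF E])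
  define h where "h = (1 / lin g Nuc) *s g"
  have k: "\<forall>v. lin h v = 0 \<longleftrightarrow> lin g v = 0" using gN by (simp add: h_def lin_smulth)
  show ?thesis
    using ker_eq_section[OF k] ker_eq_elliptic[OF k] E gN by (intro exI[of _ h]) (simp add: h_def lin_smulth)
qed
end

theorem mainTheorem5:
  fixes A :: "5 \<Rightarrow> 5 \<Rightarrow> 'a::{field,finite}"
    and n :: nat
    and X1 X2 :: "('a^5) set set"
  assumes q: "CARD('a) = 2 ^ n"
    and Q0: "parabolic A"
    and X1: "elliptic_ovoid A X1" and X2: "elliptic_ovoid A X2"
    and conic: "X1 \<noteq> X2" "nondeg_conic A (X1 \<inter> X2)"
  shows "(\<forall>x \<in> X1 - X2. card {X. elliptic_ovoid A X \<and> x \<in> X \<and> tangent X X1 \<and> tangent X X2} = 2)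
     \<and> (\<forall>x \<in> X1 \<inter> X2. \<not> (\<exists>X. elliptic_ovoid A X \<and> x \<in> X \<and> tangent X X1 \<and> tangent X X2))"
proof -
  have c2a: "(1::'a) + 1 = 0" by (rule char2_of_card[OF q])
  interpret G: geo A
    apply unfold_locales using c2a Q0 by auto
  obtain g1 where g1: "elliptic_solid A g1" "X1 = solid_section A g1" using X1 unfolding elliptic_ovoid_def by blast
  obtain g2 where g2: "elliptic_solid A g2" "X2 = solid_section A g2" using X2 unfolding elliptic_ovoid_def by blast
  obtain h1 where h1: "elliptic_solid A h1" "X1 = solid_section A h1" "lin h1 G.Nuc = 1"
    using G.normalize[OF g1(1)] g1(2) by metis
  obtain h2 where h2: "elliptic_solid A h2" "X2 = solid_section A h2" "lin h2 G.Nuc = 1"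
    using G.normalize[OF g2(1)] g2(2) by metis
  interpret T: two A h1 h2
    apply unfold_locales using h1 h2 conic by auto
  have part1: "card {X. elliptic_ovoid A X \<and> x \<in> X \<and> tangent X X1 \<and> tangent X X2} = 2"
    if x: "x \<in> X1 - X2" for x
  proof -
    obtain x0 where x0: "x0 \<noteq> 0" "x = pt x0" "qform A x0 = 0" "lin h1 x0 = 0"
      using x h1(2) sec_elem by blast
    interpret P: pt3 A h1 h2 x0
      apply unfold_locales using x0 by auto
    have "lin h2 x0 \<noteq> 0" using x x0 h2(2) sec_mem[OF x0(1)] by auto
    hence t: "P.t0 \<noteq> 0" using P.h2x0 by simp
    obtain z0 where z0: "qform A G.Nuc * z0^2 + z0 + qform A T.ell = 0" using P.root_ex[OF t] by blast
    define c where "c = qform A G.Nuc"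
    have c0: "c \<noteq> 0" using G.cN by (simp add: c_def)
    define a1 where "a1 = z0 / P.t0"
    define a2 where "a2 = (z0 + 1/c) / P.t0"
    have at1: "a1 * P.t0 = z0" using t by (simp add: a1_def)
    have at2: "a2 * P.t0 = z0 + 1/c" using t by (simp add: a2_def)
    have eq1: "c * (a1*P.t0)^2 + a1*P.t0 + qform A T.ell = 0" using z0 at1 by (simp add: c_def)
    have eq2: "c * (a2*P.t0)^2 + a2*P.t0 + qform A T.ell = 0"
      unfolding at2 by (rule G.root_other[OF c0]) (use z0 in \<open>simp add: c_def\<close>)
    have a1n: "a1 \<noteq> 0" using eq1 T.d_nz by auto
    have a2n: "a2 \<noteq> 0" using eq2 T.d_nz by auto
    have a12: "a1 \<noteq> a2"
    proof
      assume "a1 = a2" hence "z0 = z0 + 1/c" using at1 at2 by simp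
      thus False using c0 by simp
    qed
    let ?S = "{X. elliptic_ovoid A X \<and> x \<in> X \<and> tangent X X1 \<and> tangent X X2}"
    have C1: "elliptic_solid A (P.H a1)" "pt x0 \<in> solid_section A (P.H a1)"
      "tangent (solid_section A (P.H a1)) (solid_section A h1)"
      "tangent (solid_section A (P.H a1)) (solid_section A h2)"
      using P.construct[OF a1n] eq1 by (simp_all add: c_def)
    have C2: "elliptic_solid A (P.H a2)" "pt x0 \<in> solid_section A (P.H a2)"
      "tangent (solid_section A (P.H a2)) (solid_section A h1)"
      "tangent (solid_section A (P.H a2)) (solid_section A h2)"
      using P.construct[OF a2n] eq2 by (simp_all add: c_def)
    have "?S = {solid_section A (P.H a1), solid_section A (P.H a2)}"
    proof
      show "?S \<subseteq> {solid_section A (P.H a1), solid_section A (P.H a2)}"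
      proof
        fix X assume "X \<in> ?S"
        then obtain h where h: "elliptic_solid A h" "X = solid_section A h" "pt x0 \<in> X"
          "tangent X X1" "tangent X X2" unfolding elliptic_ovoid_def using x0(2) by blast
        obtain a where a: "a \<noteq> 0" "solid_section A h = solid_section A (P.H a)"
          "qform A G.Nuc * (a*P.t0)^2 + a*P.t0 + qform A T.ell = 0"
          using P.classify[OF h(1)] h h1(2) h2(2) by auto
        have "a*P.t0 = z0 \<or> a*P.t0 = z0 + 1/c"
          by (rule G.roots2[OF c0]) (use a(3) z0 in \<open>simp_all add: c_def\<close>)
        hence "a = a1 \<or> a = a2" using t by (auto simp: a1_def a2_def field_simps)
        thus "X \<in> {solid_section A (P.H a1), solid_section A (P.H a2)}" using a(2) h(2) by auto
      qed
      show "{solid_section A (P.H a1), solid_section A (P.H a2)} \<subseteq> ?S"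
        using C1 C2 x0(2) h1(2) h2(2) unfolding elliptic_ovoid_def by blast
    qed
    moreover have "solid_section A (P.H a1) \<noteq> solid_section A (P.H a2)"
      using P.distinct_H[OF C1(1) a12] by blast
    ultimately show ?thesis by simp
  qed
  have part2: "\<not> (\<exists>X. elliptic_ovoid A X \<and> x \<in> X \<and> tangent X X1 \<and> tangent X X2)"
    if x: "x \<in> X1 \<inter> X2" for x
  proof
    assume "\<exists>X. elliptic_ovoid A X \<and> x \<in> X \<and> tangent X X1 \<and> tangent X X2"
    then obtain h where h: "elliptic_solid A h" "x \<in> solid_section A h"
      "tangent (solid_section A h) X1" "tangent (solid_section A h) X2"
      unfolding elliptic_ovoid_def by blast
    obtain x0 where x0: "x0 \<noteq> 0" "x = pt x0" "qform A x0 = 0" "lin h1 x0 = 0"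
      using x h1(2) sec_elem by blast
    interpret P: pt3 A h1 h2 x0
      apply unfold_locales using x0 by auto
    have "lin h2 x0 = 0" using x x0 h2(2) sec_mem[OF x0(1)] by auto
    thus False using P.no_common h x0(2) h1(2) h2(2) by blast
  qed
  show ?thesis using part1 part2 by blast
qed


end
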